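(* Let $G=(V,E)$ be a finite graph and let $(G_n)_{n\in\mathbb{N}}$ be a sequence with $G_0=G$, $G_n$ a $2$-lift of $G_{n-1}$, and covering maps $\pi_n:G_n\to G$, such that for every $v\in V$ and every $v_n\in\pi_n^{-1}(v)$, $(G_n,v_n)\to(T(G),v)$ in $\mathcal{G}_\star$. Then $G_n$ converges in the local weak sense to $(T(G),o)$, where $o$ is the root of $T(G)$ corresponding to a uniformly random vertex $v$ of $G$.
   Context: A $2$-lift of $G$ has vertex set $V\times\{0,1\}$ with each edge $(u,v)$ replaced either by $((u,0),(v,0)),((u,1),(v,1))$ or by $((u,0),(v,1)),((u,1),(v,0))$. $(T(G),v)$ is the tree of finite non-backtracking walks in $G$ from $v$. $\mathcal{G}_\star$ is the space of locally finite connected rooted graphs up to rooted isomorphism with distance $1/(1+r)$, $r$ the largest radius at which the balls around the roots are rooted-isomorphic. For a finite graph $H$, $\mathcal{U}(H)$ is the law on $\mathcal{G}_\star$ of $H$ restricted to the component of a uniformly random root; $H_n$ converges in the local weak sense to a random rooted graph $(T,o)$ if $\mathcal{U}(H_n)$ converges weakly to the law of $(T,o)$. *)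

theory Defs
  imports "HOL-Probability.Probability" "HOL-Library.Countable"
begin

type_synonym 'a ugraph = "'a set \<times> ('a \<Rightarrow> 'a \<Rightarrow> bool)"

definition simple_graph :: "'a ugraph \<Rightarrow> bool" where
  "simple_graph G \<longleftrightarrow>
     (\<forall>x y. snd G x y \<longrightarrow> x \<in> fst G \<and> y \<in> fst G) \<and>
     (\<forall>x y. snd G x y \<longrightarrow> snd G y x) \<and>
     (\<forall>x. \<not> snd G x x)"

definition locally_finite :: "'a ugraph \<Rightarrow> bool" where
  "locally_finite G \<longleftrightarrow> (\<forall>x \<in> fst G. finite {y. snd G x y})"

fun ball_set :: "'a ugraph \<Rightarrow> 'a \<Rightarrow> nat \<Rightarrow> 'a set" where
  "ball_set G rt 0 = {rt}"
| "ball_set G rt (Suc r) = ball_set G rt r \<union> {y. \<exists>x \<in> ball_set G rt r. snd G x y}"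

definition induced :: "'a ugraph \<Rightarrow> 'a set \<Rightarrow> 'a ugraph" where
  "induced G S = (S \<inter> fst G, \<lambda>x y. x \<in> S \<and> y \<in> S \<and> snd G x y)"

definition ball :: "'a ugraph \<Rightarrow> 'a \<Rightarrow> nat \<Rightarrow> 'a ugraph" where
  "ball G rt r = induced G (ball_set G rt r)"

definition comp_set :: "'a ugraph \<Rightarrow> 'a \<Rightarrow> 'a set" where
  "comp_set G rt = (\<Union>r. ball_set G rt r)"

definition component :: "'a ugraph \<Rightarrow> 'a \<Rightarrow> 'a ugraph" where
  "component G rt = induced G (comp_set G rt)"

definition rooted_iso :: "'a ugraph \<Rightarrow> 'a \<Rightarrow> 'b ugraph \<Rightarrow> 'b \<Rightarrow> bool" where
  "rooted_iso G rt H rt' \<longleftrightarrow>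
     (\<exists>f. bij_betw f (fst G) (fst H) \<and> f rt = rt' \<and>
          (\<forall>x \<in> fst G. \<forall>y \<in> fst G. snd G x y \<longleftrightarrow> snd H (f x) (f y)))"

definition balls_iso :: "'a ugraph \<Rightarrow> 'a \<Rightarrow> 'b ugraph \<Rightarrow> 'b \<Rightarrow> nat \<Rightarrow> bool" where
  "balls_iso G rt H rt' r \<longleftrightarrow> rooted_iso (ball G rt r) rt (ball H rt' r) rt'"

definition rdist :: "'a ugraph \<Rightarrow> 'a \<Rightarrow> 'b ugraph \<Rightarrow> 'b \<Rightarrow> real" where
  "rdist G rt H rt' =
     (if \<forall>r. balls_iso G rt H rt' r then 0
      else 1 / (1 + real (GREATEST r. balls_iso G rt H rt' r)))"

text \<open>Every locally finite connected rooted graph is countable, so has a representative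
  with vertices in nat; elements of G_star are represented by such rooted graphs,
  functions on G_star by rooted-isomorphism-invariant functions on them.\<close>
definition Gstar :: "(nat ugraph \<times> nat) set" where
  "Gstar = {(H, rt). simple_graph H \<and> locally_finite H \<and> rt \<in> fst H \<and> fst H = comp_set H rt}"

definition bounded_continuous_Gstar :: "(nat ugraph \<times> nat \<Rightarrow> real) \<Rightarrow> bool" where
  "bounded_continuous_Gstar f \<longleftrightarrow>
     (\<exists>B. \<forall>x \<in> Gstar. \<bar>f x\<bar> \<le> B) \<and>
     (\<forall>(H, rt) \<in> Gstar. \<forall>(H', rt') \<in> Gstar. rooted_iso H rt H' rt' \<longrightarrow> f (H, rt) = f (H', rt')) \<and>
     (\<forall>(H, rt) \<in> Gstar. \<forall>e > 0. \<exists>d > 0. \<forall>(H', rt') \<in> Gstar.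
         rdist H rt H' rt' < d \<longrightarrow> \<bar>f (H, rt) - f (H', rt')\<bar> < e)"

definition map_graph :: "('a \<Rightarrow> 'b) \<Rightarrow> 'a ugraph \<Rightarrow> 'b ugraph" where
  "map_graph g G = (g ` fst G, \<lambda>x y. \<exists>a \<in> fst G. \<exists>b \<in> fst G. g a = x \<and> g b = y \<and> snd G a b)"

definition rep :: "'a::countable ugraph \<Rightarrow> 'a \<Rightarrow> nat ugraph \<times> nat" where
  "rep G rt = (map_graph to_nat (component G rt), to_nat rt)"

definition U_law :: "'a::countable ugraph \<Rightarrow> (nat ugraph \<times> nat) pmf" where
  "U_law H = map_pmf (rep H) (pmf_of_set (fst H))"

definition local_weak_conv :: "(nat \<Rightarrow> 'a::countable ugraph) \<Rightarrow> (nat ugraph \<times> nat) pmf \<Rightarrow> bool" where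
  "local_weak_conv Hs \<mu> \<longleftrightarrow>
     (\<forall>f. bounded_continuous_Gstar f \<longrightarrow>
        (\<lambda>n. measure_pmf.expectation (U_law (Hs n)) f) \<longlonglongrightarrow> measure_pmf.expectation \<mu> f)"

definition nb_walk :: "'v ugraph \<Rightarrow> 'v \<Rightarrow> 'v list \<Rightarrow> bool" where
  "nb_walk G v w \<longleftrightarrow> v \<in> fst G \<and> w \<noteq> [] \<and> hd w = v \<and>
     (\<forall>i. Suc i < length w \<longrightarrow> snd G (w ! i) (w ! Suc i)) \<and>
     (\<forall>i. Suc (Suc i) < length w \<longrightarrow> w ! Suc (Suc i) \<noteq> w ! i)"

text \<open>T(G) rooted at v: vertices are the finite non-backtracking walks from v
  (vertex lists), root the trivial walk [v], edges extend a walk by one step.\<close>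
definition nb_tree :: "'v ugraph \<Rightarrow> 'v \<Rightarrow> 'v list ugraph" where
  "nb_tree G v = ({w. nb_walk G v w},
     \<lambda>p q. nb_walk G v p \<and> nb_walk G v q \<and> ((\<exists>x. q = p @ [x]) \<or> (\<exists>x. p = q @ [x])))"

section \<open>2-lifts, with vertices of G_n encoded as (v, b_n ... b_1) :: 'v \<times> bool list\<close>

definition base_graph :: "'v ugraph \<Rightarrow> ('v \<times> bool list) ugraph" where
  "base_graph G = ((\<lambda>v. (v, [])) ` fst G,
     \<lambda>p q. snd p = [] \<and> snd q = [] \<and> fst p \<in> fst G \<and> fst q \<in> fst G \<and> snd G (fst p) (fst q))"

definition lift_vertex :: "'v \<times> bool list \<Rightarrow> bool \<Rightarrow> 'v \<times> bool list" where
  "lift_vertex x b = (fst x, b # snd x)"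

definition unlift :: "'v \<times> bool list \<Rightarrow> 'v \<times> bool list" where
  "unlift p = (fst p, tl (snd p))"

text \<open>H' is a 2-lift of H: the sign s x y = s y x says whether edge (x,y) is crossed.\<close>
definition two_lift :: "('v \<times> bool list) ugraph \<Rightarrow> ('v \<times> bool list) ugraph \<Rightarrow> bool" where
  "two_lift H H' \<longleftrightarrow> (\<exists>s. (\<forall>x y. s x y = s y x) \<and>
     H' = ({lift_vertex x b | x b. x \<in> fst H},
           \<lambda>p q. p \<in> {lift_vertex x b | x b. x \<in> fst H} \<and>
                 q \<in> {lift_vertex x b | x b. x \<in> fst H} \<and>
                 snd H (unlift p) (unlift q) \<and>
                 (hd (snd q) = (hd (snd p) \<noteq> s (unlift p) (unlift q)))))"

end

theory Submission
  imports Defs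
begin

definition edges_in :: "'a ugraph \<Rightarrow> bool" where
  "edges_in H \<longleftrightarrow> (\<forall>x y. snd H x y \<longrightarrow> x \<in> fst H \<and> y \<in> fst H)"

lemma ball_set_root: "rt \<in> ball_set G rt r"
  by (induction r) auto

lemma ball_set_mono: "r \<le> r' \<Longrightarrow> ball_set G rt r \<subseteq> ball_set G rt r'"
  by (induction r' rule: dec_induct) auto

lemma ball_set_sub_comp: "ball_set G rt r \<subseteq> comp_set G rt"
  unfolding comp_set_def by blast

lemma ball_set_step_comp: "x \<in> ball_set G rt r \<Longrightarrow> snd G x y \<Longrightarrow> y \<in> comp_set G rt"
  unfolding comp_set_def by (rule UN_I[of "Suc r"]) auto

lemma ball_set_component: "ball_set (component G rt) rt r = ball_set G rt r"
proof (induction r)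
  case 0 then show ?case by simp
next
  case (Suc r)
  have "{y. \<exists>x\<in>ball_set G rt r. snd (component G rt) x y} = {y. \<exists>x\<in>ball_set G rt r. snd G x y}"
    using ball_set_sub_comp[of G rt r] ball_set_step_comp[of _ G rt r]
    by (auto simp: component_def induced_def)
  then show ?case using Suc by simp
qed

lemma ball_component: "ball (component G rt) rt r = ball G rt r"
  unfolding ball_def ball_set_component
  using ball_set_sub_comp[of G rt r]
  by (auto simp: component_def induced_def fun_eq_iff)

lemma comp_set_component: "comp_set (component G rt) rt = comp_set G rt"
  by (simp add: comp_set_def ball_set_component)

lemma ball_set_sub_fst: "edges_in G \<Longrightarrow> rt \<in> fst G \<Longrightarrow> ball_set G rt r \<subseteq> fst G"
  by (induction r) (auto simp: edges_in_def)

lemma comp_set_sub_fst: "edges_in G \<Longrightarrow> rt \<in> fst G \<Longrightarrow> comp_set G rt \<subseteq> fst G"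
  unfolding comp_set_def by (intro UN_least ball_set_sub_fst)

lemma ball_set_map: 
  assumes "inj g" "edges_in H"
  shows "ball_set (map_graph g H) (g a) r = g ` ball_set H a r"
proof (induction r)
  case 0 then show ?case by simp
next
  case (Suc r)
  have "{y. \<exists>x\<in>g ` ball_set H a r. snd (map_graph g H) x y} = g ` {y. \<exists>x\<in>ball_set H a r. snd H x y}"
    using assms by (auto simp: map_graph_def edges_in_def inj_eq)
  then show ?case using Suc by (simp add: image_Un)
qed

lemma ball_map:
  assumes "inj g" "edges_in H"
  shows "ball (map_graph g H) (g a) r = map_graph g (ball H a r)"
  using assms unfolding ball_def ball_set_map[OF assms]
  by (auto simp: induced_def map_graph_def inj_eq edges_in_def fun_eq_iff)

lemma rooted_iso_map:
  assumes "inj g"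
  shows "rooted_iso K a (map_graph g K) (g a)"
  unfolding rooted_iso_def
  apply (rule exI[of _ g])
  using assms by (auto simp: map_graph_def inj_eq bij_betw_def intro: inj_on_subset)

lemma rooted_iso_sym: "rooted_iso G a H b \<Longrightarrow> a \<in> fst G \<Longrightarrow> rooted_iso H b G a"
proof -
  assume "rooted_iso G a H b" and a: "a \<in> fst G"
  then obtain f where f: "bij_betw f (fst G) (fst H)" "f a = b"
    "\<forall>x \<in> fst G. \<forall>y \<in> fst G. snd G x y \<longleftrightarrow> snd H (f x) (f y)"
    unfolding rooted_iso_def by blast
  define h where "h = inv_into (fst G) f"
  have 1: "bij_betw h (fst H) (fst G)" unfolding h_def using f(1) by (rule bij_betw_inv_into)
  have 2: "h b = a" unfolding h_def f(2)[symmetric]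
    by (rule inv_into_f_f[OF bij_betw_imp_inj_on[OF f(1)] a])
  have 3: "\<forall>x \<in> fst H. \<forall>y \<in> fst H. snd H x y \<longleftrightarrow> snd G (h x) (h y)"
  proof (intro ballI)
    fix x y assume xy: "x \<in> fst H" "y \<in> fst H"
    have im: "f ` fst G = fst H" using f(1) by (rule bij_betw_imp_surj_on)
    have hx: "h x \<in> fst G" "f (h x) = x" "h y \<in> fst G" "f (h y) = y"
      unfolding h_def using xy
      by (auto intro!: inv_into_into f_inv_into_f simp only: im)
    then show "snd H x y \<longleftrightarrow> snd G (h x) (h y)" using f(3)[rule_format, OF hx(1) hx(3)] by simp
  qed
  show ?thesis unfolding rooted_iso_def using 1 2 3 by blast
qed

lemma rooted_iso_trans: "rooted_iso G a H b \<Longrightarrow> rooted_iso H b K c \<Longrightarrow> rooted_iso G a K c"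
proof -
  assume "rooted_iso G a H b" "rooted_iso H b K c"
  then obtain f g where f: "bij_betw f (fst G) (fst H)" "f a = b"
    "\<forall>x \<in> fst G. \<forall>y \<in> fst G. snd G x y \<longleftrightarrow> snd H (f x) (f y)"
    and g: "bij_betw g (fst H) (fst K)" "g b = c"
    "\<forall>x \<in> fst H. \<forall>y \<in> fst H. snd H x y \<longleftrightarrow> snd K (g x) (g y)"
    unfolding rooted_iso_def by blast
  show ?thesis unfolding rooted_iso_def
    apply (rule exI[of _ "g \<circ> f"])
    using f g by (auto intro: bij_betw_trans dest: bij_betwE)
qed


lemma edges_in_component: "edges_in A \<Longrightarrow> edges_in (component A a)"
  by (auto simp: edges_in_def component_def induced_def)

lemma root_in_ball: "a \<in> fst A \<Longrightarrow> a \<in> fst (ball A a r)"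
  by (simp add: ball_def induced_def ball_set_root)

lemma iso_rep:
  assumes "edges_in A" "a \<in> fst A"
  shows "rooted_iso (ball A a r) a (ball (fst (rep A a)) (snd (rep A a)) r) (snd (rep A a))"
proof -
  have "ball (fst (rep A a)) (snd (rep A a)) r = map_graph to_nat (ball A a r)"
    unfolding rep_def fst_conv snd_conv
    by (simp add: ball_map[OF inj_to_nat edges_in_component[OF assms(1)]] ball_component)
  then show ?thesis using rooted_iso_map[OF inj_to_nat] by (simp add: rep_def)
qed

lemma root_in_ball_rep:
  assumes "edges_in A" "a \<in> fst A"
  shows "snd (rep A a) \<in> fst (ball (fst (rep A a)) (snd (rep A a)) r)"
proof -
  have "ball (fst (rep A a)) (snd (rep A a)) r = map_graph to_nat (ball A a r)"
    unfolding rep_def fst_conv snd_conv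
    by (simp add: ball_map[OF inj_to_nat edges_in_component[OF assms(1)]] ball_component)
  then show ?thesis using root_in_ball[OF assms(2), of r] by (simp add: rep_def map_graph_def)
qed

lemma balls_iso_rep:
  assumes "edges_in A" "a \<in> fst A" "edges_in B" "b \<in> fst B"
  shows "balls_iso (fst (rep A a)) (snd (rep A a)) (fst (rep B b)) (snd (rep B b)) r \<longleftrightarrow> balls_iso A a B b r"
  unfolding balls_iso_def
  by (meson assms iso_rep root_in_ball root_in_ball_rep rooted_iso_sym rooted_iso_trans)

lemma rdist_rep:
  assumes "edges_in A" "a \<in> fst A" "edges_in B" "b \<in> fst B"
  shows "rdist (fst (rep A a)) (snd (rep A a)) (fst (rep B b)) (snd (rep B b)) = rdist A a B b"
  unfolding rdist_def balls_iso_rep[OF assms] ..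

lemma rdist_sym:
  assumes "a \<in> fst A" "b \<in> fst B"
  shows "rdist A a B b = rdist B b A a"
proof -
  have "balls_iso A a B b r \<longleftrightarrow> balls_iso B b A a r" for r
    unfolding balls_iso_def using assms root_in_ball rooted_iso_sym by metis
  then have "balls_iso A a B b = balls_iso B b A a" by (intro ext)
  then show ?thesis unfolding rdist_def by simp
qed

lemma simple_edges_in: "simple_graph A \<Longrightarrow> edges_in A"
  by (simp add: simple_graph_def edges_in_def)

lemma rep_Gstar:
  assumes "simple_graph A" "locally_finite A" "a \<in> fst A"
  shows "rep A a \<in> Gstar"
proof -
  have e: "edges_in A" using assms(1) by (rule simple_edges_in)
  let ?C = "component A a"
  let ?M = "map_graph to_nat ?C"
  have eC: "edges_in ?C" using e by (rule edges_in_component)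
  have fC: "fst ?C = comp_set A a" using comp_set_sub_fst[OF e assms(3)]
    by (auto simp: component_def induced_def)
  have s: "simple_graph ?M"
    using assms(1) unfolding simple_graph_def map_graph_def component_def induced_def
    by (auto simp: inj_eq)
  have lf: "locally_finite ?M"
    unfolding locally_finite_def
  proof
    fix x assume "x \<in> fst ?M"
    then obtain a' where a': "a' \<in> fst ?C" "x = to_nat a'" by (auto simp: map_graph_def)
    have "{y. snd ?M x y} \<subseteq> to_nat ` {y. snd A a' y}"
      using a' by (auto simp: map_graph_def component_def induced_def)
    moreover have "finite {y. snd A a' y}" using assms(2) a'(1)
      by (auto simp: locally_finite_def component_def induced_def)
    ultimately show "finite {y. snd ?M x y}" by (meson finite_imageI finite_subset)
  qed
  have r: "to_nat a \<in> fst ?M" using fC ball_set_root[of a A 0] ball_set_sub_comp[of A a 0]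
    by (auto simp: map_graph_def)
  have c: "fst ?M = comp_set ?M (to_nat a)"
  proof -
    have "comp_set ?M (to_nat a) = to_nat ` comp_set ?C a"
      unfolding comp_set_def ball_set_map[OF inj_to_nat eC] by blast
    then show ?thesis using fC comp_set_component[of A a] by (simp add: map_graph_def)
  qed
  show ?thesis unfolding Gstar_def rep_def using s lf r c by simp
qed


lemma simple_base: "simple_graph G \<Longrightarrow> simple_graph (base_graph G)"
  unfolding simple_graph_def base_graph_def by (auto simp: image_iff)

lemma two_lift_props:
  assumes "two_lift H H'" "simple_graph H"
  shows "simple_graph H'" "fst H' = {lift_vertex x b | x b. x \<in> fst H}"
proof -
  obtain s where s: "\<forall>x y. s x y = s y x" and H': "H' = ({lift_vertex x b | x b. x \<in> fst H},
           \<lambda>p q. p \<in> {lift_vertex x b | x b. x \<in> fst H} \<and>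
                 q \<in> {lift_vertex x b | x b. x \<in> fst H} \<and>
                 snd H (unlift p) (unlift q) \<and>
                 (hd (snd q) = (hd (snd p) \<noteq> s (unlift p) (unlift q))))"
    using assms(1) unfolding two_lift_def by blast
  show "fst H' = {lift_vertex x b | x b. x \<in> fst H}" using H' by simp
  have hs: "\<forall>x y. snd H x y \<longrightarrow> snd H y x" "\<forall>x. \<not> snd H x x"
    using assms(2) unfolding simple_graph_def by blast+
  have a1: "\<forall>p q. snd H' p q \<longrightarrow> p \<in> fst H' \<and> q \<in> fst H'" by (simp add: H')
  have a2: "\<forall>p q. snd H' p q \<longrightarrow> snd H' q p"
  proof (intro allI impI)
    fix p q assume e: "snd H' p q"
    have "snd H (unlift p) (unlift q)" using e by (simp add: H')
    then have "snd H (unlift q) (unlift p)" using hs(1) by blast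
    moreover have "s (unlift q) (unlift p) = s (unlift p) (unlift q)" using s by blast
    ultimately show "snd H' q p" using e by (simp add: H') blast
  qed
  have a3: "\<forall>p. \<not> snd H' p p"
  proof
    fix p show "\<not> snd H' p p" using hs(2)[rule_format, of "unlift p"] by (simp add: H')
  qed
  show "simple_graph H'" unfolding simple_graph_def using a1 a2 a3 by blast
qed

lemma Gs_props:
  assumes "simple_graph G" "Gs 0 = base_graph G" "\<forall>n. two_lift (Gs n) (Gs (Suc n))"
  shows "simple_graph (Gs n) \<and> fst (Gs n) = fst G \<times> {bs. length bs = n}"
proof (induction n)
  case 0
  then show ?case using assms simple_base[OF assms(1)] by (auto simp: base_graph_def)
next
  case (Suc n)
  then have "simple_graph (Gs (Suc n))" "fst (Gs (Suc n)) = {lift_vertex x b | x b. x \<in> fst (Gs n)}"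
    using two_lift_props assms(3) by blast+
  moreover have "{lift_vertex x b | x b. x \<in> fst G \<times> {bs. length bs = n}} = fst G \<times> {bs. length bs = Suc n}"
    by (auto simp: lift_vertex_def length_Suc_conv)
  ultimately show ?case using Suc by simp
qed

lemma nb_tree_simple: "simple_graph (nb_tree G v)"
  unfolding simple_graph_def nb_tree_def by auto

lemma nb_tree_root: "v \<in> fst G \<Longrightarrow> [v] \<in> fst (nb_tree G v)"
  unfolding nb_tree_def nb_walk_def by simp

lemma nb_tree_lf:
  assumes "simple_graph G" "finite (fst G)"
  shows "locally_finite (nb_tree G v)"
  unfolding locally_finite_def
proof
  fix p assume "p \<in> fst (nb_tree G v)"
  have "{q. snd (nb_tree G v) p q} \<subseteq> (\<lambda>x. p @ [x]) ` fst G \<union> {butlast p}"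
  proof
    fix q assume q: "q \<in> {q. snd (nb_tree G v) p q}"
    then have w: "nb_walk G v p" "nb_walk G v q" "(\<exists>x. q = p @ [x]) \<or> (\<exists>x. p = q @ [x])"
      unfolding nb_tree_def by auto
    show "q \<in> (\<lambda>x. p @ [x]) ` fst G \<union> {butlast p}"
    proof (cases "\<exists>x. q = p @ [x]")
      case True
      then obtain x where x: "q = p @ [x]" by blast
      have "p \<noteq> []" using w(1) by (simp add: nb_walk_def)
      then have "Suc (length p - 1) < length q" "q ! Suc (length p - 1) = x" using x by (auto simp: nth_append)
      then have "snd G (q ! (length p - 1)) x" using w(2) unfolding nb_walk_def by metis
      then have "x \<in> fst G" using assms(1) unfolding simple_graph_def by blast
      then show ?thesis using x by blast
    next
      case False
      then show ?thesis using w(3) by auto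
    qed
  qed
  moreover have "finite ((\<lambda>x. p @ [x]) ` fst G \<union> {butlast p})" using assms(2) by simp
  ultimately show "finite {q. snd (nb_tree G v) p q}" by (rule finite_subset)
qed


lemma simple_finite_lf: "simple_graph A \<Longrightarrow> finite (fst A) \<Longrightarrow> locally_finite A"
  unfolding locally_finite_def simple_graph_def
  by (metis (no_types, lifting) finite_subset mem_Collect_eq subsetI)

theorem proposition4p13:
  fixes G :: "'v::countable ugraph"
    and Gs :: "nat \<Rightarrow> ('v \<times> bool list) ugraph"
  assumes "simple_graph G"
    and "finite (fst G)"
    and "fst G \<noteq> {}"
    and "Gs 0 = base_graph G"
    and "\<forall>n. two_lift (Gs n) (Gs (Suc n))"
    and "\<forall>v \<in> fst G. \<forall>s. (\<forall>n. s n \<in> fst (Gs n) \<and> fst (s n) = v) \<longrightarrow>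
           (\<lambda>n. rdist (Gs n) (s n) (nb_tree G v) [v]) \<longlonglongrightarrow> 0"
  shows "local_weak_conv Gs (map_pmf (\<lambda>v. rep (nb_tree G v) [v]) (pmf_of_set (fst G)))"
  unfolding local_weak_conv_def
proof (intro allI impI)
  fix f assume bc: "bounded_continuous_Gstar f"
  define L where "L = (\<lambda>n::nat. {bs::bool list. length bs = n})"
  have GsP: "simple_graph (Gs n) \<and> fst (Gs n) = fst G \<times> L n" for n
    using Gs_props[OF assms(1,4,5)] unfolding L_def by blast
  have finL: "finite (L n)" for n unfolding L_def by (rule finite_list_length)
  have neL: "replicate n False \<in> L n" for n unfolding L_def by simp
  have finS: "finite (fst G \<times> L n)" for n using finL assms(2) by simp
  have neS: "fst G \<times> L n \<noteq> {}" for n using neL assms(3) by blast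
  have cont: "\<forall>x\<in>Gstar. \<forall>e>0. \<exists>d>0. \<forall>y\<in>Gstar. rdist (fst x) (snd x) (fst y) (snd y) < d \<longrightarrow> \<bar>f x - f y\<bar> < e"
    using bc unfolding bounded_continuous_Gstar_def by (auto simp: case_prod_unfold)
  define F where "F = (\<lambda>v. f (rep (nb_tree G v) [v]))"
  have unif: "eventually (\<lambda>n. \<forall>bs\<in>L n. \<bar>f (rep (Gs n) (v,bs)) - F v\<bar> < e) sequentially"
    if v: "v \<in> fst G" and e: "e > 0" for v e
  proof -
    define bad where "bad = (\<lambda>n bs. \<not> \<bar>f (rep (Gs n) (v,bs)) - F v\<bar> < e)"
    define s where "s = (\<lambda>n. if \<exists>bs\<in>L n. bad n bs then (v, SOME bs. bs \<in> L n \<and> bad n bs) else (v, replicate n False))"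
    have s1: "\<forall>n. s n \<in> fst (Gs n) \<and> fst (s n) = v"
    proof
      fix n
      show "s n \<in> fst (Gs n) \<and> fst (s n) = v"
      proof (cases "\<exists>bs\<in>L n. bad n bs")
        case True
        then have "(SOME bs. bs \<in> L n \<and> bad n bs) \<in> L n" by (metis (mono_tags, lifting) someI_ex)
        then show ?thesis using True GsP[of n] v by (simp add: s_def)
      next
        case False
        then show ?thesis using GsP[of n] v neL by (simp add: s_def)
      qed
    qed
    have s2: "bad n (snd (s n))" if "\<exists>bs\<in>L n. bad n bs" for n
      using that unfolding s_def by simp (metis (mono_tags, lifting) someI_ex)
    have lim: "(\<lambda>n. rdist (Gs n) (s n) (nb_tree G v) [v]) \<longlonglongrightarrow> 0" using assms(6) v s1 by blast
    define x0 where "x0 = rep (nb_tree G v) [v]"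
    have x0: "x0 \<in> Gstar" unfolding x0_def
      by (rule rep_Gstar[OF nb_tree_simple nb_tree_lf[OF assms(1,2)] nb_tree_root[OF v]])
    obtain d where d: "d > 0" "\<forall>y\<in>Gstar. rdist (fst x0) (snd x0) (fst y) (snd y) < d \<longrightarrow> \<bar>f x0 - f y\<bar> < e"
      using cont x0 e by blast
    have ev: "eventually (\<lambda>n. rdist (Gs n) (s n) (nb_tree G v) [v] < d) sequentially"
      using lim d(1) by (rule order_tendstoD(2))
    show ?thesis using ev
    proof (rule eventually_mono)
      fix n assume r: "rdist (Gs n) (s n) (nb_tree G v) [v] < d"
      have sn: "s n \<in> fst (Gs n)" using s1 by blast
      have sG: "simple_graph (Gs n)" using GsP by blast
      have y: "rep (Gs n) (s n) \<in> Gstar"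
        using rep_Gstar[OF sG simple_finite_lf[OF sG] sn] GsP[of n] finS[of n] by simp
      have "rdist (fst x0) (snd x0) (fst (rep (Gs n) (s n))) (snd (rep (Gs n) (s n))) = rdist (nb_tree G v) [v] (Gs n) (s n)"
        unfolding x0_def
        by (rule rdist_rep[OF simple_edges_in[OF nb_tree_simple] nb_tree_root[OF v] simple_edges_in[OF sG] sn])
      also have "\<dots> = rdist (Gs n) (s n) (nb_tree G v) [v]"
        by (rule rdist_sym[OF nb_tree_root[OF v] sn])
      finally have "\<bar>f x0 - f (rep (Gs n) (s n))\<bar> < e" using d(2) y r by simp
      moreover have "s n = (v, snd (s n))" using s1 by (metis prod.collapse)
      ultimately have "\<not> bad n (snd (s n))" unfolding bad_def x0_def F_def by (metis abs_minus_commute)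
      then show "\<forall>bs\<in>L n. \<bar>f (rep (Gs n) (v,bs)) - F v\<bar> < e" using s2 unfolding bad_def by blast
    qed
  qed
  have E: "measure_pmf.expectation (U_law (Gs n)) f = (\<Sum>x\<in>fst G \<times> L n. f (rep (Gs n) x)) / card (fst G \<times> L n)" for n
    unfolding U_law_def using GsP[of n] finS[of n] neS[of n] by (simp add: integral_pmf_of_set)
  have T: "measure_pmf.expectation (map_pmf (\<lambda>v. rep (nb_tree G v) [v]) (pmf_of_set (fst G))) f = (\<Sum>v\<in>fst G. F v) / card (fst G)"
    using assms(2,3) by (simp add: integral_pmf_of_set F_def)
  have T2: "(\<Sum>x\<in>fst G \<times> L n. F (fst x)) / card (fst G \<times> L n) = (\<Sum>v\<in>fst G. F v) / card (fst G)" for n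
  proof -
    have "(\<Sum>x\<in>fst G \<times> L n. F (fst x)) = (\<Sum>v\<in>fst G. \<Sum>bs\<in>L n. F v)"
      by (subst sum.cartesian_product) (simp add: case_prod_unfold)
    also have "\<dots> = real (card (L n)) * (\<Sum>v\<in>fst G. F v)"
      by (simp add: sum_distrib_left)
    finally have 1: "(\<Sum>x\<in>fst G \<times> L n. F (fst x)) = real (card (L n)) * (\<Sum>v\<in>fst G. F v)" .
    have "card (L n) \<noteq> 0" using finL neL by (metis card_0_eq empty_iff)
    then show ?thesis unfolding 1 card_cartesian_product by (simp add: field_simps)
  qed
  show "(\<lambda>n. measure_pmf.expectation (U_law (Gs n)) f) \<longlonglongrightarrow>
        measure_pmf.expectation (map_pmf (\<lambda>v. rep (nb_tree G v) [v]) (pmf_of_set (fst G))) f"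
    unfolding tendsto_iff
  proof (intro allI impI)
    fix e :: real assume e: "e > 0"
    have "eventually (\<lambda>n. \<forall>v\<in>fst G. \<forall>bs\<in>L n. \<bar>f (rep (Gs n) (v,bs)) - F v\<bar> < e/2) sequentially"
      using e by (intro eventually_ball_finite[OF assms(2)] ballI unif) auto
    then show "eventually (\<lambda>n. dist (measure_pmf.expectation (U_law (Gs n)) f)
        (measure_pmf.expectation (map_pmf (\<lambda>v. rep (nb_tree G v) [v]) (pmf_of_set (fst G))) f) < e) sequentially"
    proof (rule eventually_mono)
      fix n assume h: "\<forall>v\<in>fst G. \<forall>bs\<in>L n. \<bar>f (rep (Gs n) (v,bs)) - F v\<bar> < e/2"
      let ?S = "fst G \<times> L n"
      have c: "real (card ?S) > 0" using finS neS by (simp add: card_gt_0_iff)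
      have "measure_pmf.expectation (U_law (Gs n)) f -
            measure_pmf.expectation (map_pmf (\<lambda>v. rep (nb_tree G v) [v]) (pmf_of_set (fst G))) f
           = (\<Sum>x\<in>?S. f (rep (Gs n) x) - F (fst x)) / card ?S"
        unfolding E T T2[of n, symmetric] by (simp add: sum_subtractf diff_divide_distrib)
      moreover have "\<bar>\<Sum>x\<in>?S. f (rep (Gs n) x) - F (fst x)\<bar> \<le> real (card ?S) * (e/2)"
      proof -
        have "\<bar>\<Sum>x\<in>?S. f (rep (Gs n) x) - F (fst x)\<bar> \<le> (\<Sum>x\<in>?S. \<bar>f (rep (Gs n) x) - F (fst x)\<bar>)"
          by (rule sum_abs)
        also have "\<dots> \<le> real (card ?S) * (e/2)"
          by (rule sum_bounded_above) (use h in \<open>auto intro: less_imp_le\<close>)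
        finally show ?thesis .
      qed
      ultimately have "\<bar>measure_pmf.expectation (U_law (Gs n)) f -
            measure_pmf.expectation (map_pmf (\<lambda>v. rep (nb_tree G v) [v]) (pmf_of_set (fst G))) f\<bar> \<le> e/2"
        using c by (simp add: abs_divide divide_le_eq mult.commute)
      then show "dist (measure_pmf.expectation (U_law (Gs n)) f)
        (measure_pmf.expectation (map_pmf (\<lambda>v. rep (nb_tree G v) [v]) (pmf_of_set (fst G))) f) < e"
        using e by (simp add: dist_real_def)
    qed
  qed
qed

end
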